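(* Let $\mathcal{A}$ and $\mathcal{B}$ be alternative $W^{*}$-factors with identities $1_{\mathcal{A}},1_{\mathcal{B}}$, with $\mathcal{A}$ containing a projection $p\notin\{0,1_{\mathcal{A}}\}$, and let $\Phi:\mathcal{A}\to\mathcal{B}$ be a bijection satisfying $\Phi(ab+ba^{*})=\Phi(a)\Phi(b)+\Phi(b)\Phi(a)^{*}$ for all $a,b\in\mathcal{A}$. Then $\Phi(i\mathbb{R}1_{\mathcal{A}})=i\mathbb{R}1_{\mathcal{B}}$ and $\Phi(\mathbb{C}1_{\mathcal{A}})=\mathbb{C}1_{\mathcal{B}}$.
   Context: An alternative $W^{*}$-factor is a prime alternative $C^{*}$-algebra (complete normed alternative complex $\ast$-algebra with $\|a^{*}a\|=\|a\|^{2}$, where alternative means $a^{2}b=a(ab)$, $ba^{2}=(ba)a$) that is a dual Banach space; it is unital with center $\mathbb{C}1$. A projection is a nonzero self-adjoint idempotent. *)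

theory Defs
  imports Complex_Main
begin

text \<open>An algebra is given by a type of class banach (complete real normed space,
  supplying norm, addition and real scaling), together with a complex scalar
  multiplication smul (extending the real scaling), a (not necessarily associative)
  multiplication mul and an involution star.\<close>

definition alt_cstar_algebra ::
  "(complex \<Rightarrow> 'a::banach \<Rightarrow> 'a) \<Rightarrow> ('a \<Rightarrow> 'a \<Rightarrow> 'a) \<Rightarrow> ('a \<Rightarrow> 'a) \<Rightarrow> bool" where
  "alt_cstar_algebra smul mul star \<longleftrightarrow>
     \<comment> \<open>complex vector space structure extending the real one, compatible norm\<close>
     (\<forall>r x. smul (complex_of_real r) x = scaleR r x) \<and>
     (\<forall>c d x. smul (c * d) x = smul c (smul d x)) \<and>
     (\<forall>c d x. smul (c + d) x = smul c x + smul d x) \<and>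
     (\<forall>c x y. smul c (x + y) = smul c x + smul c y) \<and>
     (\<forall>c x. norm (smul c x) = cmod c * norm x) \<and>
     \<comment> \<open>bilinear multiplication\<close>
     (\<forall>x y z. mul (x + y) z = mul x z + mul y z) \<and>
     (\<forall>x y z. mul x (y + z) = mul x y + mul x z) \<and>
     (\<forall>c x y. mul (smul c x) y = smul c (mul x y)) \<and>
     (\<forall>c x y. mul x (smul c y) = smul c (mul x y)) \<and>
     \<comment> \<open>alternative laws\<close>
     (\<forall>a b. mul (mul a a) b = mul a (mul a b)) \<and>
     (\<forall>a b. mul b (mul a a) = mul (mul b a) a) \<and>
     \<comment> \<open>normed algebra\<close>
     (\<forall>a b. norm (mul a b) \<le> norm a * norm b) \<and>
     \<comment> \<open>involution\<close>
     (\<forall>x y. star (x + y) = star x + star y) \<and>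
     (\<forall>c x. star (smul c x) = smul (cnj c) (star x)) \<and>
     (\<forall>x. star (star x) = x) \<and>
     (\<forall>x y. star (mul x y) = mul (star y) (star x)) \<and>
     \<comment> \<open>C*-identity\<close>
     (\<forall>a. norm (mul (star a) a) = (norm a)\<^sup>2)"

definition alg_ideal ::
  "(complex \<Rightarrow> 'a::banach \<Rightarrow> 'a) \<Rightarrow> ('a \<Rightarrow> 'a \<Rightarrow> 'a) \<Rightarrow> 'a set \<Rightarrow> bool" where
  "alg_ideal smul mul I \<longleftrightarrow>
     0 \<in> I \<and> (\<forall>x\<in>I. \<forall>y\<in>I. x + y \<in> I) \<and> (\<forall>c. \<forall>x\<in>I. smul c x \<in> I) \<and>
     (\<forall>a. \<forall>x\<in>I. mul a x \<in> I \<and> mul x a \<in> I)"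

definition alg_prime ::
  "(complex \<Rightarrow> 'a::banach \<Rightarrow> 'a) \<Rightarrow> ('a \<Rightarrow> 'a \<Rightarrow> 'a) \<Rightarrow> bool" where
  "alg_prime smul mul \<longleftrightarrow>
     (\<forall>I J. alg_ideal smul mul I \<and> alg_ideal smul mul J \<and>
        (\<forall>x\<in>I. \<forall>y\<in>J. mul x y = 0) \<longrightarrow> I = {0} \<or> J = {0})"

definition bdd_clin_functional ::
  "(complex \<Rightarrow> 'a::banach \<Rightarrow> 'a) \<Rightarrow> ('a \<Rightarrow> complex) \<Rightarrow> bool" where
  "bdd_clin_functional smul f \<longleftrightarrow>
     (\<forall>x y. f (x + y) = f x + f y) \<and> (\<forall>c x. f (smul c x) = c * f x) \<and>
     (\<exists>K. \<forall>x. cmod (f x) \<le> K * norm x)"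

definition fnorm :: "('a::banach \<Rightarrow> complex) \<Rightarrow> real" where
  "fnorm f = (SUP x\<in>{x. norm x \<le> 1}. cmod (f x))"

text \<open>Dual Banach space: there is a predual, realised (as usual) as a norm-closed
  complex subspace F of the dual A* such that the canonical map a \<mapsto> (f \<mapsto> f a)
  is an isometric isomorphism of A onto F*.\<close>

definition dual_banach_space ::
  "(complex \<Rightarrow> 'a::banach \<Rightarrow> 'a) \<Rightarrow> bool" where
  "dual_banach_space smul \<longleftrightarrow>
    (\<exists>F. F \<subseteq> {f. bdd_clin_functional smul f} \<and>
         (\<lambda>x. 0) \<in> F \<and> (\<forall>f\<in>F. \<forall>g\<in>F. (\<lambda>x. f x + g x) \<in> F) \<and>
         (\<forall>c. \<forall>f\<in>F. (\<lambda>x. c * f x) \<in> F) \<and>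
         \<comment> \<open>closed in the dual norm\<close>
         (\<forall>s g. (\<forall>n. s n \<in> F) \<and> bdd_clin_functional smul g \<and>
               (\<lambda>n. fnorm (\<lambda>x. s n x - g x)) \<longlonglongrightarrow> 0 \<longrightarrow> g \<in> F) \<and>
         \<comment> \<open>canonical map is isometric\<close>
         (\<forall>a. \<forall>e>0. \<exists>f\<in>F. fnorm f \<le> 1 \<and> cmod (f a) \<ge> norm a - e) \<and>
         \<comment> \<open>canonical map is onto F*\<close>
         (\<forall>\<phi>. (\<forall>f\<in>F. \<forall>g\<in>F. \<phi> (\<lambda>x. f x + g x) = \<phi> f + \<phi> g) \<and>
               (\<forall>c. \<forall>f\<in>F. \<phi> (\<lambda>x. c * f x) = c * \<phi> f) \<and>
               (\<exists>K. \<forall>f\<in>F. cmod (\<phi> f) \<le> K * fnorm f)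
             \<longrightarrow> (\<exists>a. \<forall>f\<in>F. \<phi> f = f a)))"

definition is_unit :: "('a \<Rightarrow> 'a \<Rightarrow> 'a) \<Rightarrow> 'a \<Rightarrow> bool" where
  "is_unit mul u \<longleftrightarrow> (\<forall>x. mul u x = x \<and> mul x u = x)"

definition alg_one :: "('a \<Rightarrow> 'a \<Rightarrow> 'a) \<Rightarrow> 'a" where
  "alg_one mul = (THE u. is_unit mul u)"

definition alg_center :: "('a::ab_group_add \<Rightarrow> 'a \<Rightarrow> 'a) \<Rightarrow> 'a set" where
  "alg_center mul = {z. \<forall>x y. mul z x = mul x z \<and>
      mul (mul z x) y = mul z (mul x y) \<and>
      mul (mul x z) y = mul x (mul z y) \<and>
      mul (mul x y) z = mul x (mul y z)}"

definition alt_Wstar_factor ::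
  "(complex \<Rightarrow> 'a::banach \<Rightarrow> 'a) \<Rightarrow> ('a \<Rightarrow> 'a \<Rightarrow> 'a) \<Rightarrow> ('a \<Rightarrow> 'a) \<Rightarrow> bool" where
  "alt_Wstar_factor smul mul star \<longleftrightarrow>
     alt_cstar_algebra smul mul star \<and> alg_prime smul mul \<and> dual_banach_space smul \<and>
     (\<exists>u. is_unit mul u) \<and>
     alg_center mul = {smul c (alg_one mul) | c. True}"

definition is_projection ::
  "('a::banach \<Rightarrow> 'a \<Rightarrow> 'a) \<Rightarrow> ('a \<Rightarrow> 'a) \<Rightarrow> 'a \<Rightarrow> bool" where
  "is_projection mul star p \<longleftrightarrow> p \<noteq> 0 \<and> star p = p \<and> mul p p = p"

end

theory Submission
  imports Defs
begin

locale altalg =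
  fixes smul :: "complex \<Rightarrow> 'a::banach \<Rightarrow> 'a" and mul :: "'a \<Rightarrow> 'a \<Rightarrow> 'a"
    and star :: "'a \<Rightarrow> 'a"
  assumes ax: "alt_cstar_algebra smul mul star" and ex1: "\<exists>u. is_unit mul u"
begin

lemmas axs = ax[unfolded alt_cstar_algebra_def]
lemmas smul_real = axs[THEN conjunct1, rule_format]
lemmas smul_mult = axs[THEN conjunct2, THEN conjunct1, rule_format]
lemmas smul_add1 = axs[THEN conjunct2, THEN conjunct2, THEN conjunct1, rule_format]
lemmas smul_add2 = axs[THEN conjunct2, THEN conjunct2, THEN conjunct2, THEN conjunct1, rule_format]
lemmas norm_smul = axs[THEN conjunct2, THEN conjunct2, THEN conjunct2, THEN conjunct2, THEN conjunct1, rule_format]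
lemmas mul_add1 = axs[THEN conjunct2, THEN conjunct2, THEN conjunct2, THEN conjunct2, THEN conjunct2, THEN conjunct1, rule_format]
lemmas mul_add2 = axs[THEN conjunct2, THEN conjunct2, THEN conjunct2, THEN conjunct2, THEN conjunct2, THEN conjunct2, THEN conjunct1, rule_format]
lemmas mul_smul1 = axs[THEN conjunct2, THEN conjunct2, THEN conjunct2, THEN conjunct2, THEN conjunct2, THEN conjunct2, THEN conjunct2, THEN conjunct1, rule_format]
lemmas mul_smul2 = axs[THEN conjunct2, THEN conjunct2, THEN conjunct2, THEN conjunct2, THEN conjunct2, THEN conjunct2, THEN conjunct2, THEN conjunct2, THEN conjunct1, rule_format]
lemmas altL = axs[THEN conjunct2, THEN conjunct2, THEN conjunct2, THEN conjunct2, THEN conjunct2, THEN conjunct2, THEN conjunct2, THEN conjunct2, THEN conjunct2, THEN conjunct1, rule_format]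
lemmas altR = axs[THEN conjunct2, THEN conjunct2, THEN conjunct2, THEN conjunct2, THEN conjunct2, THEN conjunct2, THEN conjunct2, THEN conjunct2, THEN conjunct2, THEN conjunct2, THEN conjunct1, rule_format]
lemmas star_add = axs[THEN conjunct2, THEN conjunct2, THEN conjunct2, THEN conjunct2, THEN conjunct2, THEN conjunct2, THEN conjunct2, THEN conjunct2, THEN conjunct2, THEN conjunct2, THEN conjunct2, THEN conjunct2, THEN conjunct1, rule_format]
lemmas star_smul = axs[THEN conjunct2, THEN conjunct2, THEN conjunct2, THEN conjunct2, THEN conjunct2, THEN conjunct2, THEN conjunct2, THEN conjunct2, THEN conjunct2, THEN conjunct2, THEN conjunct2, THEN conjunct2, THEN conjunct2, THEN conjunct1, rule_format]
lemmas star_star = axs[THEN conjunct2, THEN conjunct2, THEN conjunct2, THEN conjunct2, THEN conjunct2, THEN conjunct2, THEN conjunct2, THEN conjunct2, THEN conjunct2, THEN conjunct2, THEN conjunct2, THEN conjunct2, THEN conjunct2, THEN conjunct2, THEN conjunct1, rule_format]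
lemmas star_mul = axs[THEN conjunct2, THEN conjunct2, THEN conjunct2, THEN conjunct2, THEN conjunct2, THEN conjunct2, THEN conjunct2, THEN conjunct2, THEN conjunct2, THEN conjunct2, THEN conjunct2, THEN conjunct2, THEN conjunct2, THEN conjunct2, THEN conjunct2, THEN conjunct1, rule_format]

lemma mul_diff1: "mul (x - y) z = mul x z - mul y z"
  by (metis add_diff_cancel_right' diff_add_cancel mul_add1)
lemma mul_diff2: "mul z (x - y) = mul z x - mul z y"
  by (metis add_diff_cancel_right' diff_add_cancel mul_add2)
lemma mul_zero1[simp]: "mul 0 x = 0" by (metis diff_self mul_diff1)
lemma mul_zero2[simp]: "mul x 0 = 0" by (metis diff_self mul_diff2)
lemma mul_minus1: "mul (- x) y = - mul x y" by (metis diff_0 mul_diff1 mul_zero1)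
lemma mul_minus2: "mul y (- x) = - mul y x" by (metis diff_0 mul_diff2 mul_zero2)
lemma star_diff: "star (x - y) = star x - star y"
  by (metis add_diff_cancel_right' diff_add_cancel star_add)
lemma star_zero[simp]: "star 0 = 0" by (metis diff_self star_diff)
lemma smul_zero1[simp]: "smul 0 x = 0" using smul_real[of 0 x] by simp
lemma smul_one[simp]: "smul 1 x = x" using smul_real[of 1 x] by simp
lemma smul_neg: "smul (- c) x = - smul c x"
  by (metis add.right_inverse add_eq_0_iff smul_add1 smul_zero1)
lemma smul_diff2: "smul c (x - y) = smul c x - smul c y"
  by (metis add_diff_cancel_right' diff_add_cancel smul_add2)
lemma smul_zero2[simp]: "smul c 0 = 0" by (metis diff_self smul_diff2)
lemma smul_minus2: "smul c (- x) = - smul c x" by (metis diff_0 smul_diff2 smul_zero2)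

definition one where "one = alg_one mul"

lemma one_unit: "is_unit mul one"
proof -
  obtain u where u: "is_unit mul u" using ex1 by blast
  have "\<And>v. is_unit mul v \<Longrightarrow> v = u" using u unfolding is_unit_def by metis
  hence "(THE u. is_unit mul u) = u" using u by (rule the_equality[rotated])
  thus ?thesis using u unfolding one_def alg_one_def by simp
qed
lemma mul_one1[simp]: "mul one x = x" using one_unit unfolding is_unit_def by blast
lemma mul_one2[simp]: "mul x one = x" using one_unit unfolding is_unit_def by blast
lemma star_one[simp]: "star one = one"
proof -
  have "mul (star one) one = star one" by simp
  moreover have "mul (star one) one = one"
    by (metis mul_one2 star_mul star_star)
  ultimately show ?thesis by simp
qed

definition as where "as a b c = mul (mul a b) c - mul a (mul b c)"

lemma as_aab: "as a a b = 0" unfolding as_def by (simp add: altL)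
lemma as_baa: "as b a a = 0" unfolding as_def by (simp add: altR)
lemma as_add1: "as (a + a') b c = as a b c + as a' b c"
  unfolding as_def by (simp add: mul_add1 mul_add2)
lemma as_add2: "as a (b + b') c = as a b c + as a b' c"
  unfolding as_def by (simp add: mul_add1 mul_add2)
lemma as_add3: "as a b (c + c') = as a b c + as a b c'"
  unfolding as_def by (simp add: mul_add1 mul_add2)
lemma as_sw12: "as a b c = - as b a c"
proof -
  have "as (a+b) (a+b) c = 0" by (rule as_aab)
  hence "as a a c + as a b c + (as b a c + as b b c) = 0"
    by (simp add: as_add1 as_add2 add_ac)
  thus ?thesis by (simp add: as_aab eq_neg_iff_add_eq_0)
qed
lemma as_sw23: "as a b c = - as a c b"
proof -
  have "as a (b+c) (b+c) = 0" by (rule as_baa)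
  hence "as a b b + as a b c + (as a c b + as a c c) = 0"
    by (simp add: as_add2 as_add3 add_ac)
  thus ?thesis by (simp add: as_baa eq_neg_iff_add_eq_0)
qed
lemma as_cyc: "as a b c = as b c a"
  by (metis as_sw12 as_sw23 minus_minus)

lemma commute_center:
  assumes c: "\<forall>x. mul z x = mul x z"
  shows "z \<in> alg_center mul"
proof -
  have a0: "as x y z = 0" for x y
  proof -
    have id: "(mul (mul x y) z - mul z (mul x y)) - (mul x (mul y z) - mul x (mul z y))
        - (mul (mul x z) y - mul (mul z x) y) = as x y z - as x z y + as z x y"
      unfolding as_def by (simp add: algebra_simps)
    have "(mul (mul x y) z - mul z (mul x y)) - (mul x (mul y z) - mul x (mul z y))
        - (mul (mul x z) y - mul (mul z x) y) = 0" using c by simp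
    hence "as x y z + as x y z + as x y z = 0"
      using id by (metis as_cyc as_sw23 diff_minus_eq_add)
    hence "(3::real) *\<^sub>R as x y z = 0"
    proof -
      have "((1::real)+1+1) *\<^sub>R as x y z = as x y z + as x y z + as x y z"
        by (simp only: scaleR_left_distrib scaleR_one)
      moreover have "(1::real)+1+1 = 3" by simp
      ultimately show ?thesis using \<open>as x y z + as x y z + as x y z = 0\<close> by simp
    qed
    thus ?thesis by simp
  qed
  show ?thesis unfolding alg_center_def
  proof (safe)
    fix x y
    show "mul z x = mul x z" using c by simp
    show "mul (mul z x) y = mul z (mul x y)"
      using a0[of x y] as_cyc[of z x y] unfolding as_def by simp
    show "mul (mul x z) y = mul x (mul z y)"
      using a0[of x y] as_sw23[of x z y] unfolding as_def by simp
    show "mul (mul x y) z = mul x (mul y z)"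
      using a0[of x y] unfolding as_def by simp
  qed
qed

definition jp where "jp a b = mul a b + mul b (star a)"
definition S where "S = {z. \<forall>b. jp z b = 0}"
definition W where "W = {z. \<forall>b. \<forall>s\<in>S. jp (jp b s) z = 0}"

lemma S_skew: "s \<in> S \<Longrightarrow> star s = - s"
proof -
  assume "s \<in> S"
  hence "jp s one = 0" unfolding S_def by blast
  thus ?thesis unfolding jp_def by (simp add: eq_neg_iff_add_eq_0 add.commute)
qed

lemma S_comm: "s \<in> S \<Longrightarrow> \<forall>x. mul s x = mul x s"
proof
  fix x assume s: "s \<in> S"
  hence "jp s x = 0" unfolding S_def by blast
  thus "mul s x = mul x s" using S_skew[OF s] unfolding jp_def
    by (simp add: mul_minus2 add_eq_0_iff)
qed

lemma iS: "smul \<i> one \<in> S"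
  unfolding S_def jp_def
  by (simp add: star_smul mul_smul1 mul_smul2 smul_neg mul_minus2)

lemma W_comm:
  assumes z: "z \<in> W" shows "\<forall>x. mul z x = mul x z"
proof -
  have h: "mul (b + star b) z = mul z (b + star b)" for b
  proof -
    let ?h = "b + star b"
    have sh: "star ?h = ?h" by (simp add: star_add star_star add.commute)
    have "jp (jp b (smul \<i> one)) z = 0" using z iS unfolding W_def by blast
    moreover have "jp b (smul \<i> one) = smul \<i> ?h"
      unfolding jp_def by (simp add: star_smul mul_smul1 mul_smul2 smul_add2)
    ultimately have "mul (smul \<i> ?h) z + mul z (star (smul \<i> ?h)) = 0"
      unfolding jp_def by simp
    hence "smul \<i> (mul ?h z - mul z ?h) = 0"
      by (simp add: star_smul sh mul_smul1 mul_smul2 smul_neg smul_diff2 mul_minus2)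
    hence "smul (- \<i>) (smul \<i> (mul ?h z - mul z ?h)) = 0" by simp
    hence "mul ?h z - mul z ?h = 0" by (simp flip: smul_mult)
    thus ?thesis by simp
  qed
  show ?thesis
  proof
    fix x
    have 1: "mul (x + star x) z = mul z (x + star x)" by (rule h)
    have 2: "mul (smul \<i> x + star (smul \<i> x)) z = mul z (smul \<i> x + star (smul \<i> x))" by (rule h)
    hence "smul \<i> (mul x z - mul (star x) z) = smul \<i> (mul z x - mul z (star x))"
      by (simp add: star_smul mul_add1 mul_add2 mul_diff1 mul_diff2 mul_smul1 mul_smul2 smul_neg smul_diff2
          algebra_simps)
    hence "smul (- \<i>) (smul \<i> (mul x z - mul (star x) z)) = smul (- \<i>) (smul \<i> (mul z x - mul z (star x)))"
      by simp
    hence "mul x z - mul (star x) z = mul z x - mul z (star x)" by (simp flip: smul_mult)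
    with 1 have "mul x z + mul (star x) z + (mul x z - mul (star x) z)
       = mul z x + mul z (star x) + (mul z x - mul z (star x))"
      by (simp add: mul_add1 mul_add2)
    hence "mul x z + mul x z = mul z x + mul z x" by (simp add: algebra_simps)
    hence "(2::real) *\<^sub>R mul x z = (2::real) *\<^sub>R mul z x" by (simp add: scaleR_2)
    thus "mul z x = mul x z" by simp
  qed
qed

lemma S_char:
  assumes cen: "alg_center mul = {smul c one | c. True}" and nz: "one \<noteq> 0"
  shows "S = {smul (\<i> * complex_of_real r) one | r. True}"
proof safe
  fix z assume z: "z \<in> S"
  have "z \<in> alg_center mul" using commute_center S_comm[OF z] by blast
  then obtain c where c: "z = smul c one" using cen by blast
  have "smul (cnj c) one = - smul c one" using S_skew[OF z] c by (simp add: star_smul)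
  hence "smul (cnj c + c) one = 0" by (simp add: smul_add1)
  hence "cmod (cnj c + c) * norm one = 0" by (metis norm_smul norm_zero)
  hence "cnj c + c = 0" using nz by simp
  hence "Re (cnj c + c) = 0" by simp
  hence "Re c = 0" by simp
  hence ce: "c = \<i> * complex_of_real (Im c)" by (simp add: complex_eq_iff)
  have "z = smul (\<i> * complex_of_real (Im c)) one"
    using c arg_cong[OF ce, of "\<lambda>w. smul w one"] by (rule trans)
  thus "\<exists>r. z = smul (\<i> * complex_of_real r) one \<and> True" by blast
next
  fix r
  show "smul (\<i> * complex_of_real r) one \<in> S"
    unfolding S_def jp_def
    by (simp add: star_smul mul_smul1 mul_smul2 flip: smul_add1)
qed

lemma W_char:
  assumes cen: "alg_center mul = {smul c one | c. True}"
  shows "W = {smul c one | c. True}"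
proof safe
  fix z assume "z \<in> W"
  hence "z \<in> alg_center mul" using commute_center W_comm by blast
  thus "\<exists>c. z = smul c one \<and> True" using cen by blast
next
  fix c
  show "smul c one \<in> W" unfolding W_def
  proof safe
    fix b s assume s: "s \<in> S"
    let ?x = "jp b s"
    have sk: "star ?x = - ?x" unfolding jp_def
      by (simp add: star_add star_mul star_star S_skew[OF s] mul_minus1 mul_minus2)
    show "jp ?x (smul c one) = 0"
      unfolding jp_def[of ?x] by (simp add: sk mul_smul1 mul_smul2 smul_add2 smul_diff2 smul_minus2 flip: diff_conv_add_uminus)
  qed
qed

end

lemma bij_image_iff:
  assumes "bij f" "\<And>z. z \<in> X \<longleftrightarrow> f z \<in> Y" shows "f ` X = Y"
proof
  show "f ` X \<subseteq> Y" using assms(2) by blast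
  show "Y \<subseteq> f ` X"
  proof
    fix y assume y: "y \<in> Y"
    have e: "f (inv f y) = y" using assms(1) by (simp add: bij_is_surj surj_f_inv_f)
    hence "inv f y \<in> X" using assms(2) y by simp
    with e show "y \<in> f ` X" by (metis imageI)
  qed
qed

theorem lemma2p5:
  fixes smulA :: "complex \<Rightarrow> 'a::banach \<Rightarrow> 'a" and mulA :: "'a \<Rightarrow> 'a \<Rightarrow> 'a"
    and starA :: "'a \<Rightarrow> 'a"
    and smulB :: "complex \<Rightarrow> 'b::banach \<Rightarrow> 'b" and mulB :: "'b \<Rightarrow> 'b \<Rightarrow> 'b"
    and starB :: "'b \<Rightarrow> 'b"
    and \<Phi> :: "'a \<Rightarrow> 'b"
  assumes A: "alt_Wstar_factor smulA mulA starA"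
    and B: "alt_Wstar_factor smulB mulB starB"
    and p: "\<exists>p. is_projection mulA starA p \<and> p \<noteq> alg_one mulA"
    and bij: "bij \<Phi>"
    and eq: "\<And>a b. \<Phi> (mulA a b + mulA b (starA a)) = mulB (\<Phi> a) (\<Phi> b) + mulB (\<Phi> b) (starB (\<Phi> a))"
  shows "\<Phi> ` {smulA (\<i> * complex_of_real r) (alg_one mulA) | r. True}
           = {smulB (\<i> * complex_of_real r) (alg_one mulB) | r. True} \<and>
         \<Phi> ` {smulA c (alg_one mulA) | c. True} = {smulB c (alg_one mulB) | c. True}"
proof -
  have A1: "alt_cstar_algebra smulA mulA starA" and A2: "\<exists>u. is_unit mulA u"
    using A unfolding alt_Wstar_factor_def by blast+
  interpret a: altalg smulA mulA starA using A1 A2 by (rule altalg.intro)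
  have B1: "alt_cstar_algebra smulB mulB starB" and B2: "\<exists>u. is_unit mulB u"
    using B unfolding alt_Wstar_factor_def by blast+
  interpret b: altalg smulB mulB starB using B1 B2 by (rule altalg.intro)
  have cA: "alg_center mulA = {smulA c a.one | c. True}"
    using A unfolding alt_Wstar_factor_def a.one_def by blast
  have cB: "alg_center mulB = {smulB c b.one | c. True}"
    using B unfolding alt_Wstar_factor_def b.one_def by blast
  have inj: "inj \<Phi>" and surj: "surj \<Phi>" using bij by (auto simp: bij_def)
  have jpe: "\<Phi> (a.jp x y) = b.jp (\<Phi> x) (\<Phi> y)" for x y
    unfolding a.jp_def b.jp_def by (rule eq)
  have z0: "\<Phi> 0 = 0"
  proof -
    obtain b where "\<Phi> b = 0" using surj by (metis surjD)
    have "\<Phi> (a.jp 0 b) = b.jp (\<Phi> 0) (\<Phi> b)" by (rule jpe)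
    thus ?thesis using \<open>\<Phi> b = 0\<close> unfolding a.jp_def b.jp_def by simp
  qed
  obtain pp where pp: "is_projection mulA starA pp" by (metis p)
  have nzA: "a.one \<noteq> 0"
  proof
    assume "a.one = 0"
    hence "pp = 0" by (metis a.mul_one2 a.mul_zero2)
    thus False using pp unfolding is_projection_def by simp
  qed
  have nzB: "b.one \<noteq> 0"
  proof
    assume "b.one = 0"
    hence "\<forall>y::'b. y = 0" by (metis b.mul_one2 b.mul_zero2)
    hence "\<Phi> pp = 0" by (rule spec)
    hence "\<Phi> pp = \<Phi> 0" using z0 by simp
    hence "pp = 0" using inj by (meson injD)
    thus False using pp unfolding is_projection_def by simp
  qed
  have Siff: "z \<in> a.S \<longleftrightarrow> \<Phi> z \<in> b.S" for z
  proof
    assume z: "z \<in> a.S"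
    show "\<Phi> z \<in> b.S" unfolding b.S_def
    proof safe
      fix b'
      obtain bb where bb: "b' = \<Phi> bb" using surj by (metis surj_f_inv_f)
      have "a.jp z bb = 0" using z unfolding a.S_def by blast
      hence "\<Phi> (a.jp z bb) = 0" using z0 by simp
      thus "b.jp (\<Phi> z) b' = 0" using bb by (simp add: jpe)
    qed
  next
    assume z: "\<Phi> z \<in> b.S"
    show "z \<in> a.S" unfolding a.S_def
    proof safe
      fix bb
      have "b.jp (\<Phi> z) (\<Phi> bb) = 0" using z unfolding b.S_def by blast
      hence "\<Phi> (a.jp z bb) = \<Phi> 0" using z0 by (simp add: jpe)
      thus "a.jp z bb = 0" using inj by (meson injD)
    qed
  qed
  have SS: "\<Phi> ` a.S = b.S" using bij Siff by (rule bij_image_iff)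
  have Wiff: "z \<in> a.W \<longleftrightarrow> \<Phi> z \<in> b.W" for z
  proof
    assume z: "z \<in> a.W"
    show "\<Phi> z \<in> b.W" unfolding b.W_def
    proof safe
      fix b' s' assume s': "s' \<in> b.S"
      obtain bb where bb: "b' = \<Phi> bb" using surj by (metis surj_f_inv_f)
      obtain s where s: "s \<in> a.S" "s' = \<Phi> s" using s' SS by blast
      have "a.jp (a.jp bb s) z = 0" using z s unfolding a.W_def by blast
      hence "\<Phi> (a.jp (a.jp bb s) z) = 0" using z0 by simp
      thus "b.jp (b.jp b' s') (\<Phi> z) = 0" using bb s by (simp add: jpe)
    qed
  next
    assume z: "\<Phi> z \<in> b.W"
    show "z \<in> a.W" unfolding a.W_def
    proof safe
      fix bb s assume s: "s \<in> a.S"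
      have "\<Phi> s \<in> b.S" using s Siff by blast
      hence "b.jp (b.jp (\<Phi> bb) (\<Phi> s)) (\<Phi> z) = 0" using z unfolding b.W_def by blast
      hence "\<Phi> (a.jp (a.jp bb s) z) = \<Phi> 0" using z0 by (simp add: jpe)
      thus "a.jp (a.jp bb s) z = 0" using inj by (meson injD)
    qed
  qed
  have WW: "\<Phi> ` a.W = b.W" using bij Wiff by (rule bij_image_iff)
  have 1: "\<Phi> ` {smulA (\<i> * complex_of_real r) (alg_one mulA) | r. True}
           = {smulB (\<i> * complex_of_real r) (alg_one mulB) | r. True}"
    using SS unfolding a.S_char[OF cA nzA] b.S_char[OF cB nzB] a.one_def b.one_def .
  have 2: "\<Phi> ` {smulA c (alg_one mulA) | c. True} = {smulB c (alg_one mulB) | c. True}"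
    using WW unfolding a.W_char[OF cA] b.W_char[OF cB] a.one_def b.one_def .
  show ?thesis using 1 2 by (rule conjI)
qed

end
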